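(* Let $a\in(0,1)$ and $p(z)=(z-a)\prod_{k=1}^{8}(z-z_k)$ with $|z_k|\le1$ and $z_k\ne a$, and write $p'(z)=9\prod_{j=1}^{8}(z-\zeta_j)$. Let $r_k=|a-z_k|$, $\rho_j=|a-\zeta_j|$, and suppose $\rho_j\ge1$ for all $j$. Then $$\prod_{j=1}^{8}|\zeta_j|\le\Big(\prod_{j=1}^{8}\rho_j\Big)\Big(a^2-1+\frac14\sum_{k=1}^{8}\frac{|z_k|^2-a^2}{r_k^2}\Big)^4.$$ *)

theory Defs
  imports "HOL-Analysis.Analysis" "HOL-Computational_Algebra.Polynomial"
begin

end

theory Submission
  imports Defs
begin

lemma logderiv_prod:
  fixes x :: "nat \<Rightarrow> complex"
  assumes "finite S" "\<And>j. j \<in> S \<Longrightarrow> x j \<noteq> t"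
  shows "poly (pderiv (\<Prod>j\<in>S. [:- x j, 1:])) t = poly (\<Prod>j\<in>S. [:- x j, 1:]) t * (\<Sum>j\<in>S. 1 / (t - x j))"
proof -
  have "poly (pderiv (\<Prod>j\<in>S. [:- x j, 1:])) t = (\<Sum>j\<in>S. \<Prod>i\<in>S-{j}. (t - x i))"
    by (simp add: pderiv_prod poly_sum poly_prod pderiv_pCons)
  also have "\<dots> = (\<Sum>j\<in>S. (\<Prod>i\<in>S. (t - x i)) * (1 / (t - x j)))"
  proof (rule sum.cong[OF refl])
    fix j assume j: "j \<in> S"
    have "(\<Prod>i\<in>S. (t - x i)) = (t - x j) * (\<Prod>i\<in>S-{j}. (t - x i))"
      using assms(1) j by (simp add: prod.remove)
    then show "(\<Prod>i\<in>S-{j}. (t - x i)) = (\<Prod>i\<in>S. (t - x i)) * (1 / (t - x j))"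
      using assms(2)[OF j] by (simp add: field_simps)
  qed
  also have "\<dots> = poly (\<Prod>j\<in>S. [:- x j, 1:]) t * (\<Sum>j\<in>S. 1 / (t - x j))"
    by (simp add: poly_prod sum_distrib_left)
  finally show ?thesis .
qed

lemma re_identity:
  fixes a :: real and z :: complex
  assumes "z \<noteq> complex_of_real a"
  shows "((cmod z)\<^sup>2 - a\<^sup>2) / (cmod (complex_of_real a - z))\<^sup>2 = 1 - 2 * a * Re (1 / (complex_of_real a - z))"
proof -
  have n1: "(cmod z)\<^sup>2 = (Re z)\<^sup>2 + (Im z)\<^sup>2" by (simp add: cmod_power2)
  have n2: "(cmod (complex_of_real a - z))\<^sup>2 = (a - Re z)\<^sup>2 + (Im z)\<^sup>2" by (simp add: cmod_power2)
  have ne: "(a - Re z)\<^sup>2 + (Im z)\<^sup>2 \<noteq> 0"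
    using assms n2 by (metis eq_iff_diff_eq_0 norm_eq_zero power_eq_0_iff)
  have r: "Re (1 / (complex_of_real a - z)) = (a - Re z) / ((a - Re z)\<^sup>2 + (Im z)\<^sup>2)"
    by (simp add: Re_divide power2_eq_square)
  show ?thesis unfolding n1 n2 r
    using ne by (simp add: field_simps) (simp add: power2_eq_square algebra_simps)
qed

lemma norm_one_minus:
  fixes a :: real and w :: complex
  assumes "0 < a" "cmod w \<le> 1"
  shows "(cmod (1 - complex_of_real a * w))\<^sup>2 \<le> 1 + a\<^sup>2 - 2 * a * Re w"
proof -
  have "(cmod w)\<^sup>2 \<le> 1" using assms norm_ge_zero by (simp add: power_le_one)
  hence "(Re w)\<^sup>2 + (Im w)\<^sup>2 \<le> 1" by (simp add: cmod_power2)
  hence h: "a\<^sup>2 * ((Re w)\<^sup>2 + (Im w)\<^sup>2) \<le> a\<^sup>2" by (simp add: mult_left_le)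
  have "(cmod (1 - complex_of_real a * w))\<^sup>2 = (1 - a * Re w)\<^sup>2 + (a * Im w)\<^sup>2"
    by (simp add: cmod_power2)
  thus ?thesis using h by (simp add: power2_eq_square algebra_simps)
qed

theorem lemma3p11:
  fixes a :: real and z \<zeta> :: "nat \<Rightarrow> complex" and p :: "complex poly"
  assumes a: "0 < a" "a < 1"
    and p_def: "p = [:- complex_of_real a, 1:] * (\<Prod>k=1..8. [:- z k, 1:])"
    and z_disk: "\<And>k. k \<in> {1..8} \<Longrightarrow> cmod (z k) \<le> 1"
    and z_ne: "\<And>k. k \<in> {1..8} \<Longrightarrow> z k \<noteq> complex_of_real a"
    and dp: "pderiv p = smult 9 (\<Prod>j=1..8. [:- \<zeta> j, 1:])"
    and rho: "\<And>j. j \<in> {1..8} \<Longrightarrow> cmod (complex_of_real a - \<zeta> j) \<ge> 1"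
  shows "(\<Prod>j=1..8. cmod (\<zeta> j)) \<le>
    (\<Prod>j=1..8. cmod (complex_of_real a - \<zeta> j)) *
    (a\<^sup>2 - 1 + (1/4) * (\<Sum>k=1..8. ((cmod (z k))\<^sup>2 - a\<^sup>2) / (cmod (complex_of_real a - z k))\<^sup>2)) ^ 4"
proof -
  define ca where "ca = complex_of_real a"
  define Q where "Q = (\<Prod>k=(1::nat)..8. [:- z k, 1:])"
  define Z where "Z = (\<Prod>j=(1::nat)..8. [:- \<zeta> j, 1:])"
  define L where "L = [:- ca, 1:]"
  define w where "w j = 1 / (ca - \<zeta> j)" for j
  have zne: "\<And>j. j \<in> {1..8} \<Longrightarrow> \<zeta> j \<noteq> ca"
    using rho unfolding ca_def by force
  have zkne: "\<And>k. k \<in> {1..8} \<Longrightarrow> z k \<noteq> ca" using z_ne ca_def by auto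
  have pL: "p = L * Q" using p_def L_def Q_def ca_def by simp
  have d1: "pderiv p = Q + L * pderiv Q" unfolding pL pderiv_mult L_def by (simp add: pderiv_pCons algebra_simps)
  have d2: "pderiv (pderiv p) = pderiv Q + pderiv Q + L * pderiv (pderiv Q)"
    unfolding d1 pderiv_add pderiv_mult L_def by (simp add: pderiv_pCons algebra_simps smult_add_left)
  have La: "poly L ca = 0" by (simp add: L_def)
  have Qa: "poly Q ca \<noteq> 0" unfolding Q_def poly_prod using zkne by (auto simp: eq_commute[of ca])
  have Za: "poly Z ca \<noteq> 0" unfolding Z_def poly_prod using zne by (auto simp: eq_commute[of ca])
  have e1: "poly Q ca = 9 * poly Z ca"
    using arg_cong[OF dp, of "\<lambda>r. poly r ca"] d1 La Z_def by simp
  have e2: "2 * poly (pderiv Q) ca = 9 * poly (pderiv Z) ca"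
    using arg_cong[OF dp, of "\<lambda>r. poly (pderiv r) ca"] d2 La Z_def by (simp add: pderiv_smult)
  have lQ: "poly (pderiv Q) ca = poly Q ca * (\<Sum>k=1..8. 1 / (ca - z k))"
    unfolding Q_def by (rule logderiv_prod) (use zkne in auto)
  have lZ: "poly (pderiv Z) ca = poly Z ca * (\<Sum>j=1..8. w j)"
    unfolding Z_def w_def by (rule logderiv_prod) (use zne in auto)
  have W: "(\<Sum>j=1..8. w j) = 2 * (\<Sum>k=1..8. 1 / (ca - z k))"
    using e1 e2 lQ lZ Za by (simp add: field_simps)
  have ReW: "(\<Sum>j=1..8. Re (w j)) = 2 * (\<Sum>k=1..8. Re (1 / (ca - z k)))"
    using arg_cong[OF W, of Re] by (simp add: Re_sum sum_distrib_left Re_divide)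
  define inner where "inner = a\<^sup>2 - 1 + (1/4) * (\<Sum>k=1..8. ((cmod (z k))\<^sup>2 - a\<^sup>2) / (cmod (complex_of_real a - z k))\<^sup>2)"
  have inner_eq: "inner = (\<Sum>j=1..8. (1 + a\<^sup>2 - 2 * a * Re (w j)) / 8)"
  proof -
    have "(\<Sum>k=1..8. ((cmod (z k))\<^sup>2 - a\<^sup>2) / (cmod (complex_of_real a - z k))\<^sup>2)
        = (\<Sum>k=(1::nat)..8. 1 - 2 * a * Re (1 / (ca - z k)))"
      using re_identity z_ne unfolding ca_def by (intro sum.cong) auto
    also have "\<dots> = 8 - 2 * a * (\<Sum>k=1..8. Re (1 / (ca - z k)))"
      by (simp add: sum_subtractf sum_distrib_left)
    finally have s: "(\<Sum>k=1..8. ((cmod (z k))\<^sup>2 - a\<^sup>2) / (cmod (complex_of_real a - z k))\<^sup>2)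
        = 8 - a * (\<Sum>j=1..8. Re (w j))" using ReW by simp
    have "(\<Sum>j=(1::nat)..8. (1 + a\<^sup>2 - 2 * a * Re (w j)) / 8) = (8 + 8 * a\<^sup>2 - 2 * a * (\<Sum>j=1..8. Re (w j))) / 8"
      by (simp add: sum_divide_distrib[symmetric] sum_subtractf sum.distrib sum_distrib_left)
    then show ?thesis unfolding inner_def s by (simp add: field_simps)
  qed
  define x where "x j = (cmod (1 - ca * w j))\<^sup>2" for j
  have wle: "\<And>j. j \<in> {1..8} \<Longrightarrow> cmod (w j) \<le> 1"
    using rho unfolding w_def ca_def by (simp add: norm_divide divide_le_eq_1)
  have xle: "\<And>j. j \<in> {1..8} \<Longrightarrow> x j \<le> 1 + a\<^sup>2 - 2 * a * Re (w j)"
    unfolding x_def ca_def using norm_one_minus a(1) wle by blast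
  have prodz: "(\<Prod>j=1..8. cmod (\<zeta> j)) = (\<Prod>j=1..8. cmod (complex_of_real a - \<zeta> j)) * (\<Prod>j=(1::nat)..8. cmod (1 - ca * w j))"
  proof -
    have "\<And>j. j \<in> {1..8} \<Longrightarrow> cmod (\<zeta> j) = cmod (complex_of_real a - \<zeta> j) * cmod (1 - ca * w j)"
    proof -
      fix j assume j: "j \<in> {(1::nat)..8}"
      have "(ca - \<zeta> j) * (1 - ca * w j) = - \<zeta> j"
        using zne[OF j] unfolding w_def by (simp add: field_simps)
      then show "cmod (\<zeta> j) = cmod (complex_of_real a - \<zeta> j) * cmod (1 - ca * w j)"
        by (metis ca_def norm_minus_cancel norm_mult)
    qed
    then show ?thesis by (simp add: prod.distrib[symmetric])
  qed
  have x0: "\<And>j. x j \<ge> 0" unfolding x_def by simp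
  have amgm: "(\<Prod>j=(1::nat)..8. x j) powr (1 / 8) \<le> (\<Sum>j=1..8. x j / 8)"
    using arith_geom_mean[of "{(1::nat)..8}" x] x0 by simp
  have m_le: "(\<Sum>j=(1::nat)..8. x j / 8) \<le> inner"
    unfolding inner_eq by (intro sum_mono) (use xle in \<open>auto simp: divide_right_mono\<close>)
  define P where "P = (\<Prod>j=(1::nat)..8. cmod (1 - ca * w j))"
  have P0: "P \<ge> 0" unfolding P_def by (simp add: prod_nonneg)
  have Px: "(\<Prod>j=(1::nat)..8. x j) = P ^ 2"
    unfolding P_def x_def by (simp add: prod_power_distrib)
  define g where "g = (P ^ 2) powr (1/8)"
  have g0: "g \<ge> 0" unfolding g_def by simp
  have gle: "g \<le> inner" using amgm m_le Px g_def by simp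
  have g8: "g ^ 8 = P ^ 2"
  proof (cases "P = 0")
    case True then show ?thesis by (simp add: g_def)
  next
    case False
    have "g ^ 8 = (P ^ 2) powr (real 8 * (1/8))" unfolding g_def using False by (subst powr_power) auto
    also have "\<dots> = P ^ 2" by simp
    finally show ?thesis .
  qed
  have inn0: "inner \<ge> 0" using g0 gle by linarith
  have "g ^ 8 \<le> inner ^ 8" by (rule power_mono[OF gle g0])
  hence "P ^ 2 \<le> inner ^ 8" by (simp only: g8)
  moreover have "(inner ^ 4) ^ 2 = inner ^ 8" by (subst power_mult[symmetric]) simp
  ultimately have "P ^ 2 \<le> (inner ^ 4) ^ 2" by (simp only:)
  hence "P \<le> inner ^ 4"
    by (rule power2_le_imp_le) (rule zero_le_power[OF inn0])
  hence "(\<Prod>j=1..8. cmod (complex_of_real a - \<zeta> j)) * P \<le> (\<Prod>j=1..8. cmod (complex_of_real a - \<zeta> j)) * inner ^ 4"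
    by (rule mult_left_mono) (simp add: prod_nonneg)
  then show ?thesis unfolding prodz P_def inner_def .
qed

end
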